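(* For every $z\in Z$ and all $v,w\in W$, \[ \pi\bullet\big(\zeta(v)_{I_w}\cdot z\big)=\pi\bullet\big([v]\cdot(Y_{I_w}\bullet z)\big)=(Y_{I_w}\bullet z)_v\,\mathbf{1}, \] where $(y)_v$ denotes the $v$-coordinate of $y\in Z$.
   Context: Let $\Phi$ be a finite real root system with simple roots $\Pi$, positive roots $\Phi_+$, negative roots $\Phi_-=-\Phi_+$, and finite Coxeter group $W$ generated by the reflections $s_\alpha$, $s_\alpha(\lambda)=\lambda-\alpha^\vee(\lambda)\alpha$. Let $\mathcal O\subset\mathbb R$ be its coefficient ring, $\Lambda_r$ the $\mathcal O$-span of $\Pi$, $\Lambda_w=\{\lambda\in\Lambda_r\otimes K:\alpha^\vee(\lambda)\in\mathcal O\ \forall\alpha\in\Phi_+\}$ ($K$ the fraction field of $\mathcal O$), and $\Lambda$ a free $\mathcal O$-module with $\Lambda_r\subset\Lambda\subset\Lambda_w$. Let $F$ be a one-dimensional commutative formal group law over a commutative ring $R$, and $S$ the formal group ring: $S=R[[x_\lambda]]_{\lambda\in\Lambda}/\overline{J}$ where $\overline J$ is the closure of the ideal generated by $x_0$ and $x_{\lambda+\mu}-F(x_\lambda,x_\mu)$ (no completion if $F$ is a polynomial); in the non-crystallographic case $F$ is additive, $R=\mathcal O$ and $S=\mathrm{Sym}_{\mathcal O}(\Lambda)$ with $x_\lambda=\lambda$. $W$ acts on $S$ by $w(x_\lambda)=x_{w(\lambda)}$. Assume each $x_\alpha$ is regular in $S$ and that for distinct $\alpha,\alpha'\in\Phi_+$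 and $f\in S$, $x_\alpha\mid x_{\alpha'}f$ implies $x_\alpha\mid f$. Let $Q=S[1/x_\alpha:\alpha\in\Phi_+]$ and $Q_W$ the twisted group algebra: the free left $Q$-module on $\{\delta_w\}_{w\in W}$ with $\delta_w q=w(q)\delta_w$. Put $Y_\alpha=\frac1{x_{-\alpha}}+\frac1{x_\alpha}\delta_{s_\alpha}$, $Y_i=Y_{\alpha_i}$ for simple roots $\alpha_i$. For each $w\in W$ fix a reduced expression $w=s_{i_1}\cdots s_{i_l}$, write $I_w=(i_1,\dots,i_l)$, $Y_{I_w}=Y_{i_1}\cdots Y_{i_l}$, and $I_w^{-1}=(i_l,\dots,i_1)$, $Y_{I_w^{-1}}=Y_{i_l}\cdots Y_{i_1}$. The structure algebra is $Z=\{(z_v)_{v\in W}\in\bigoplus_{v\in W}S: z_{s_\alpha w}-z_w\in x_\alpha S\ \forall w\in W,\alpha\in\Phi_+\}$ with coordinatewise product. The Hecke action of $Q_W$ is $q\delta_w\bullet(z_v)_v=(v(q)z_{vw})_v$ and the Weyl action is $q\delta_w\odot(z_v)_v=(q\,w(z_{w^{-1}v}))_v$. Let $\mathbf 1=(1)_v$, $x_\Pi=\prod_{\alpha\in\Phi_-}x_\alpha$, $[e]\in Z$ the element with $e$-coordinate $x_\Pi$ and all other coordinates $0$, $[v]=\delta_v\odot[e]$, and twisted Schubert classes $\zeta(v)_{I_w}=Y_{I_w^{-1}}\bullet[v]$. The push-forward element is $\pi=\sum_{w\in W}\frac{1}{w(x_\Pi)}\delta_w\in Q_W$, acting on $Z$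 by the Hecke action. *)

theory Defs
  imports "HOL-Analysis.Analysis"
begin

type_synonym 'n vec = "real ^ 'n"

definition coroot :: "'n::finite vec \<Rightarrow> 'n vec \<Rightarrow> real" where
  "coroot \<alpha> l = 2 * (\<alpha> \<bullet> l) / (\<alpha> \<bullet> \<alpha>)"

definition refl :: "'n::finite vec \<Rightarrow> 'n vec \<Rightarrow> 'n vec" where
  "refl \<alpha> l = l - coroot \<alpha> l *\<^sub>R \<alpha>"

definition root_system :: "'n::finite vec set \<Rightarrow> bool" where
  "root_system \<Phi> \<longleftrightarrow> finite \<Phi> \<and> 0 \<notin> \<Phi> \<and>
     (\<forall>\<alpha>\<in>\<Phi>. \<forall>\<beta>\<in>\<Phi>. refl \<alpha> \<beta> \<in> \<Phi>) \<and>
     (\<forall>\<alpha>\<in>\<Phi>. \<forall>c. c *\<^sub>R \<alpha> \<in> \<Phi> \<longrightarrow> c = 1 \<or> c = -1)"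

definition nonneg_comb :: "'n::finite vec set \<Rightarrow> 'n vec \<Rightarrow> bool" where
  "nonneg_comb Sim \<beta> \<longleftrightarrow> (\<exists>c. (\<forall>\<alpha>\<in>Sim. c \<alpha> \<ge> 0) \<and> \<beta> = (\<Sum>\<alpha>\<in>Sim. c \<alpha> *\<^sub>R \<alpha>))"

definition simple_system :: "'n::finite vec set \<Rightarrow> 'n vec set \<Rightarrow> bool" where
  "simple_system \<Phi> Sim \<longleftrightarrow> Sim \<subseteq> \<Phi> \<and> independent Sim \<and>
     (\<forall>\<beta>\<in>\<Phi>. nonneg_comb Sim \<beta> \<or> nonneg_comb Sim (- \<beta>))"

definition pos_roots :: "'n::finite vec set \<Rightarrow> 'n vec set \<Rightarrow> 'n vec set" where
  "pos_roots \<Phi> Sim = {\<beta>\<in>\<Phi>. nonneg_comb Sim \<beta>}"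

definition neg_roots :: "'n::finite vec set \<Rightarrow> 'n vec set \<Rightarrow> 'n vec set" where
  "neg_roots \<Phi> Sim = uminus ` pos_roots \<Phi> Sim"

inductive_set weyl :: "'n::finite vec set \<Rightarrow> ('n vec \<Rightarrow> 'n vec) set" for \<Phi> where
  weyl_id: "id \<in> weyl \<Phi>"
| weyl_step: "\<alpha> \<in> \<Phi> \<Longrightarrow> w \<in> weyl \<Phi> \<Longrightarrow> refl \<alpha> \<circ> w \<in> weyl \<Phi>"

inductive_set coeff_ring :: "'n::finite vec set \<Rightarrow> real set" for \<Phi> where
  cr_one: "1 \<in> coeff_ring \<Phi>"
| cr_gen: "\<alpha> \<in> \<Phi> \<Longrightarrow> \<beta> \<in> \<Phi> \<Longrightarrow> coroot \<alpha> \<beta> \<in> coeff_ring \<Phi>"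
| cr_add: "a \<in> coeff_ring \<Phi> \<Longrightarrow> b \<in> coeff_ring \<Phi> \<Longrightarrow> a + b \<in> coeff_ring \<Phi>"
| cr_neg: "a \<in> coeff_ring \<Phi> \<Longrightarrow> - a \<in> coeff_ring \<Phi>"
| cr_mult: "a \<in> coeff_ring \<Phi> \<Longrightarrow> b \<in> coeff_ring \<Phi> \<Longrightarrow> a * b \<in> coeff_ring \<Phi>"

definition coeff_field :: "'n::finite vec set \<Rightarrow> real set" where
  "coeff_field \<Phi> = {a / b | a b. a \<in> coeff_ring \<Phi> \<and> b \<in> coeff_ring \<Phi> \<and> b \<noteq> 0}"

definition span_over :: "real set \<Rightarrow> 'n::finite vec set \<Rightarrow> 'n vec set" where
  "span_over A B = {\<Sum>b\<in>B. c b *\<^sub>R b | c. \<forall>b\<in>B. c b \<in> A}"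

definition root_lattice :: "'n::finite vec set \<Rightarrow> 'n vec set \<Rightarrow> 'n vec set" where
  "root_lattice \<Phi> Sim = span_over (coeff_ring \<Phi>) Sim"

definition weight_lattice :: "'n::finite vec set \<Rightarrow> 'n vec set \<Rightarrow> 'n vec set" where
  "weight_lattice \<Phi> Sim = {l \<in> span_over (coeff_field \<Phi>) Sim.
       \<forall>\<alpha>\<in>pos_roots \<Phi> Sim. coroot \<alpha> l \<in> coeff_ring \<Phi>}"

definition admissible_lattice :: "'n::finite vec set \<Rightarrow> 'n vec set \<Rightarrow> 'n vec set \<Rightarrow> bool" where
  "admissible_lattice \<Phi> Sim \<Lambda> \<longleftrightarrow>
     root_lattice \<Phi> Sim \<subseteq> \<Lambda> \<and> \<Lambda> \<subseteq> weight_lattice \<Phi> Sim \<and>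
     (\<exists>B. finite B \<and> B \<subseteq> \<Lambda> \<and> \<Lambda> = span_over (coeff_ring \<Phi>) B \<and>
        (\<forall>c. (\<forall>b\<in>B. c b \<in> coeff_ring \<Phi>) \<longrightarrow> (\<Sum>b\<in>B. c b *\<^sub>R b) = 0 \<longrightarrow> (\<forall>b\<in>B. c b = 0)))"

section \<open>Ring data: S inside the ring Q where the x_alpha are inverted\<close>

definition qinv :: "'q::comm_ring_1 \<Rightarrow> 'q" where
  "qinv a = (THE b. a * b = 1)"

definition subring_of :: "'q::comm_ring_1 set \<Rightarrow> bool" where
  "subring_of S \<longleftrightarrow> 0 \<in> S \<and> 1 \<in> S \<and> (\<forall>a\<in>S. \<forall>b\<in>S. a + b \<in> S \<and> a - b \<in> S \<and> a * b \<in> S)"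

definition weyl_ring_action ::
  "('n::finite vec \<Rightarrow> 'n vec) set \<Rightarrow> 'n vec set \<Rightarrow> 'q::comm_ring_1 set \<Rightarrow> ('n vec \<Rightarrow> 'q)
     \<Rightarrow> (('n vec \<Rightarrow> 'n vec) \<Rightarrow> 'q \<Rightarrow> 'q) \<Rightarrow> bool" where
  "weyl_ring_action W \<Lambda> S x act \<longleftrightarrow>
     (\<forall>a. act id a = a) \<and>
     (\<forall>v\<in>W. \<forall>w\<in>W. \<forall>a. act (v \<circ> w) a = act v (act w a)) \<and>
     (\<forall>w\<in>W. act w 1 = 1 \<and> (\<forall>a b. act w (a + b) = act w a + act w b \<and> act w (a * b) = act w a * act w b)) \<and>
     (\<forall>w\<in>W. \<forall>a\<in>S. act w a \<in> S) \<and>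
     (\<forall>w\<in>W. \<forall>l\<in>\<Lambda>. act w (x l) = x (w l))"

section \<open>Twisted group algebra Q_W: elements are coefficient functions w \<mapsto> q_w (sum q_w delta_w)\<close>

definition qw_delta :: "('n::finite vec \<Rightarrow> 'n vec) \<Rightarrow> ('n vec \<Rightarrow> 'n vec) \<Rightarrow> 'q::comm_ring_1" where
  "qw_delta v = (\<lambda>u. if u = v then 1 else 0)"

text \<open>(a delta_u)(b delta_w) = a u(b) delta_(uw)\<close>
definition qw_mult ::
  "('n::finite vec \<Rightarrow> 'n vec) set \<Rightarrow> (('n vec \<Rightarrow> 'n vec) \<Rightarrow> 'q \<Rightarrow> 'q)
    \<Rightarrow> (('n vec \<Rightarrow> 'n vec) \<Rightarrow> 'q::comm_ring_1) \<Rightarrow> (('n vec \<Rightarrow> 'n vec) \<Rightarrow> 'q) \<Rightarrow> ('n vec \<Rightarrow> 'n vec) \<Rightarrow> 'q" where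
  "qw_mult W act a b = (\<lambda>t. \<Sum>u\<in>W. \<Sum>w\<in>{w\<in>W. u \<circ> w = t}. a u * act u (b w))"

text \<open>Y_alpha = 1/x_(-alpha) + 1/x_alpha delta_(s_alpha)\<close>
definition Yop :: "('n::finite vec \<Rightarrow> 'q::comm_ring_1) \<Rightarrow> 'n vec \<Rightarrow> ('n vec \<Rightarrow> 'n vec) \<Rightarrow> 'q" where
  "Yop x \<alpha> = (\<lambda>u. (if u = id then qinv (x (- \<alpha>)) else 0) + (if u = refl \<alpha> then qinv (x \<alpha>) else 0))"

definition Yword ::
  "('n::finite vec \<Rightarrow> 'n vec) set \<Rightarrow> (('n vec \<Rightarrow> 'n vec) \<Rightarrow> 'q \<Rightarrow> 'q) \<Rightarrow> ('n vec \<Rightarrow> 'q::comm_ring_1)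
     \<Rightarrow> 'n vec list \<Rightarrow> ('n vec \<Rightarrow> 'n vec) \<Rightarrow> 'q" where
  "Yword W act x I = foldr (\<lambda>\<alpha> acc. qw_mult W act (Yop x \<alpha>) acc) I (qw_delta id)"

definition word_elt :: "'n::finite vec list \<Rightarrow> 'n vec \<Rightarrow> 'n vec" where
  "word_elt I = foldr (\<lambda>\<alpha> f. refl \<alpha> \<circ> f) I id"

definition reduced_word :: "'n::finite vec set \<Rightarrow> 'n vec list \<Rightarrow> ('n vec \<Rightarrow> 'n vec) \<Rightarrow> bool" where
  "reduced_word Sim I w \<longleftrightarrow> set I \<subseteq> Sim \<and> word_elt I = w \<and>
     (\<forall>J. set J \<subseteq> Sim \<longrightarrow> word_elt J = w \<longrightarrow> length I \<le> length J)"

section \<open>Structure algebra and the two actions (elements of the direct sum are functions W -> Q, zero off W)\<close>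

definition struct_alg ::
  "('n::finite vec \<Rightarrow> 'n vec) set \<Rightarrow> 'n vec set \<Rightarrow> 'q::comm_ring_1 set \<Rightarrow> ('n vec \<Rightarrow> 'q)
     \<Rightarrow> (('n vec \<Rightarrow> 'n vec) \<Rightarrow> 'q) set" where
  "struct_alg W Pos S x = {z. (\<forall>v\<in>W. z v \<in> S) \<and> (\<forall>v. v \<notin> W \<longrightarrow> z v = 0) \<and>
      (\<forall>w\<in>W. \<forall>\<alpha>\<in>Pos. \<exists>f\<in>S. z (refl \<alpha> \<circ> w) - z w = x \<alpha> * f)}"

text \<open>Hecke action: q delta_w \<bullet> (z_v) = (v(q) z_(vw))_v\<close>
definition hecke ::
  "('n::finite vec \<Rightarrow> 'n vec) set \<Rightarrow> (('n vec \<Rightarrow> 'n vec) \<Rightarrow> 'q \<Rightarrow> 'q)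
     \<Rightarrow> (('n vec \<Rightarrow> 'n vec) \<Rightarrow> 'q::comm_ring_1) \<Rightarrow> (('n vec \<Rightarrow> 'n vec) \<Rightarrow> 'q) \<Rightarrow> ('n vec \<Rightarrow> 'n vec) \<Rightarrow> 'q" where
  "hecke W act c z = (\<lambda>v. \<Sum>w\<in>W. act v (c w) * z (v \<circ> w))"

text \<open>Weyl action: q delta_w \<odot> (z_v) = (q w(z_(w^-1 v)))_v\<close>
definition weyl_act ::
  "('n::finite vec \<Rightarrow> 'n vec) set \<Rightarrow> (('n vec \<Rightarrow> 'n vec) \<Rightarrow> 'q \<Rightarrow> 'q)
     \<Rightarrow> (('n vec \<Rightarrow> 'n vec) \<Rightarrow> 'q::comm_ring_1) \<Rightarrow> (('n vec \<Rightarrow> 'n vec) \<Rightarrow> 'q) \<Rightarrow> ('n vec \<Rightarrow> 'n vec) \<Rightarrow> 'q" where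
  "weyl_act W act c z = (\<lambda>v. \<Sum>w\<in>W. c w * act w (z (inv w \<circ> v)))"

definition zprod :: "(('n::finite vec \<Rightarrow> 'n vec) \<Rightarrow> 'q::comm_ring_1) \<Rightarrow> (('n vec \<Rightarrow> 'n vec) \<Rightarrow> 'q) \<Rightarrow> ('n vec \<Rightarrow> 'n vec) \<Rightarrow> 'q" where
  "zprod y z = (\<lambda>v. y v * z v)"

definition zone :: "('n::finite vec \<Rightarrow> 'n vec) set \<Rightarrow> ('n vec \<Rightarrow> 'n vec) \<Rightarrow> 'q::comm_ring_1" where
  "zone W = (\<lambda>v. if v \<in> W then 1 else 0)"

definition xPi :: "'n::finite vec set \<Rightarrow> 'n vec set \<Rightarrow> ('n vec \<Rightarrow> 'q::comm_ring_1) \<Rightarrow> 'q" where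
  "xPi \<Phi> Sim x = (\<Prod>\<alpha>\<in>neg_roots \<Phi> Sim. x \<alpha>)"

definition class_e :: "'q::comm_ring_1 \<Rightarrow> ('n::finite vec \<Rightarrow> 'n vec) \<Rightarrow> 'q" where
  "class_e p = (\<lambda>u. if u = id then p else 0)"

definition class_v ::
  "('n::finite vec \<Rightarrow> 'n vec) set \<Rightarrow> (('n vec \<Rightarrow> 'n vec) \<Rightarrow> 'q \<Rightarrow> 'q) \<Rightarrow> 'q::comm_ring_1
     \<Rightarrow> ('n vec \<Rightarrow> 'n vec) \<Rightarrow> ('n vec \<Rightarrow> 'n vec) \<Rightarrow> 'q" where
  "class_v W act p v = weyl_act W act (qw_delta v) (class_e p)"

text \<open>push-forward element pi = sum_w 1/w(x_Pi) delta_w\<close>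
definition pi_elt :: "(('n::finite vec \<Rightarrow> 'n vec) \<Rightarrow> 'q \<Rightarrow> 'q) \<Rightarrow> 'q::comm_ring_1 \<Rightarrow> ('n vec \<Rightarrow> 'n vec) \<Rightarrow> 'q" where
  "pi_elt act p = (\<lambda>w. qinv (act w p))"

end

theory Submission
  imports Defs
begin

lemma refl_refl: "\<alpha> \<noteq> 0 \<Longrightarrow> refl \<alpha> (refl \<alpha> l) = l"
  unfolding refl_def coroot_def by (simp add: inner_diff_right field_simps)

lemma refl_comp_self: "\<alpha> \<noteq> 0 \<Longrightarrow> refl \<alpha> \<circ> refl \<alpha> = id"
  by (rule ext) (simp add: refl_refl)

lemma bij_refl: "\<alpha> \<noteq> 0 \<Longrightarrow> bij (refl \<alpha>)"
  using o_bij[OF refl_comp_self refl_comp_self] by auto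

lemma inv_refl: "\<alpha> \<noteq> 0 \<Longrightarrow> inv (refl \<alpha>) = refl \<alpha>"
  by (metis inv_unique_comp refl_comp_self)

lemma refl_self: "\<alpha> \<noteq> 0 \<Longrightarrow> refl \<alpha> \<alpha> = - \<alpha>"
  unfolding refl_def coroot_def by (simp add: scaleR_2)

lemma refl_neg: "refl \<alpha> (- l) = - refl \<alpha> l"
  unfolding refl_def coroot_def by (simp add: algebra_simps)

lemma weyl_comp: "u \<in> weyl \<Phi> \<Longrightarrow> w \<in> weyl \<Phi> \<Longrightarrow> u \<circ> w \<in> weyl \<Phi>"
  by (induction u rule: weyl.induct) (auto simp: comp_assoc intro: weyl.intros)

lemma weyl_bij: assumes "0 \<notin> \<Phi>" "w \<in> weyl \<Phi>" shows "bij w"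
  using assms(2)
proof (induction w rule: weyl.induct)
  case weyl_id
  then show ?case by (rule bij_id)
next
  case (weyl_step \<alpha> w)
  have a: "\<alpha> \<noteq> 0" using weyl_step assms(1) by auto
  show ?case by (rule bij_comp[OF weyl_step(3) bij_refl[OF a]])
qed

lemma refl_in_weyl: "\<alpha> \<in> \<Phi> \<Longrightarrow> refl \<alpha> \<in> weyl \<Phi>"
  using weyl_step[OF _ weyl_id] by fastforce

lemma weyl_inv: assumes "0 \<notin> \<Phi>" "w \<in> weyl \<Phi>" shows "inv w \<in> weyl \<Phi>"
  using assms(2)
proof (induction w rule: weyl.induct)
  case weyl_id
  then show ?case by (metis inv_id weyl.weyl_id)
next
  case (weyl_step \<alpha> w)
  have a: "\<alpha> \<noteq> 0" using weyl_step assms(1) by auto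
  have "inv (refl \<alpha> \<circ> w) = inv w \<circ> inv (refl \<alpha>)"
    using o_inv_distrib[OF bij_refl[OF a] weyl_bij[OF assms(1) weyl_step(2)]] .
  also have "\<dots> = inv w \<circ> refl \<alpha>" using inv_refl[OF a] by simp
  finally show ?case using weyl_comp[OF weyl_step(3) refl_in_weyl[OF weyl_step(1)]] by metis
qed

lemma bij_comp_inv: "bij u \<Longrightarrow> u \<circ> inv u = id"
  by (metis bij_is_surj surj_iff)
lemma bij_inv_comp: "bij u \<Longrightarrow> inv u \<circ> u = id"
  by (metis bij_is_inj inj_iff)

lemma sum_left_weyl:
  assumes "0 \<notin> \<Phi>" "u \<in> weyl \<Phi>"
  shows "(\<Sum>w\<in>weyl \<Phi>. g (u \<circ> w)) = (\<Sum>t\<in>weyl \<Phi>. g t)"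
proof -
  have inj: "inj_on ((\<circ>) u) (weyl \<Phi>)"
    using weyl_bij[OF assms] by (metis bij_is_inj fun.inj_map inj_on_subset subset_UNIV)
  have im: "(\<circ>) u ` weyl \<Phi> = weyl \<Phi>"
  proof
    show "(\<circ>) u ` weyl \<Phi> \<subseteq> weyl \<Phi>" using weyl_comp[OF assms(2)] by auto
    show "weyl \<Phi> \<subseteq> (\<circ>) u ` weyl \<Phi>"
    proof
      fix t assume t: "t \<in> weyl \<Phi>"
      have "t = u \<circ> (inv u \<circ> t)"
        using bij_comp_inv[OF weyl_bij[OF assms]] by (simp add: o_assoc)
      moreover have "inv u \<circ> t \<in> weyl \<Phi>" using weyl_comp[OF weyl_inv[OF assms] t] .
      ultimately show "t \<in> (\<circ>) u ` weyl \<Phi>" by blast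
    qed
  qed
  show ?thesis using sum.reindex[OF inj, of g] im by simp
qed

lemma sum_right_weyl:
  assumes "0 \<notin> \<Phi>" "u \<in> weyl \<Phi>"
  shows "(\<Sum>w\<in>weyl \<Phi>. g (w \<circ> u)) = (\<Sum>t\<in>weyl \<Phi>. g t)"
proof -
  have inj: "inj_on (\<lambda>w. w \<circ> u) (weyl \<Phi>)"
  proof (rule inj_onI)
    fix a b assume "a \<circ> u = b \<circ> u"
    then have "a \<circ> u \<circ> inv u = b \<circ> u \<circ> inv u" by simp
    then show "a = b" using bij_comp_inv[OF weyl_bij[OF assms]] by (simp add: o_assoc[symmetric])
  qed
  have im: "(\<lambda>w. w \<circ> u) ` weyl \<Phi> = weyl \<Phi>"
  proof
    show "(\<lambda>w. w \<circ> u) ` weyl \<Phi> \<subseteq> weyl \<Phi>" using weyl_comp[OF _ assms(2)] by auto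
    show "weyl \<Phi> \<subseteq> (\<lambda>w. w \<circ> u) ` weyl \<Phi>"
    proof
      fix t assume t: "t \<in> weyl \<Phi>"
      have "t = (t \<circ> inv u) \<circ> u"
        using bij_inv_comp[OF weyl_bij[OF assms]] by (simp add: o_assoc[symmetric])
      moreover have "t \<circ> inv u \<in> weyl \<Phi>" using weyl_comp[OF t weyl_inv[OF assms]] .
      ultimately show "t \<in> (\<lambda>w. w \<circ> u) ` weyl \<Phi>" by blast
    qed
  qed
  show ?thesis using sum.reindex[OF inj, of g] im by (simp add: comp_def)
qed

lemma refl_inner: "\<alpha> \<noteq> 0 \<Longrightarrow> refl \<alpha> a \<bullet> refl \<alpha> b = a \<bullet> b"
  unfolding refl_def coroot_def
  by (simp add: inner_diff_left inner_diff_right inner_commute field_simps)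

lemma weyl_inner: assumes "0 \<notin> \<Phi>" "w \<in> weyl \<Phi>" shows "w a \<bullet> w b = a \<bullet> b"
  using assms(2)
proof (induction w rule: weyl.induct)
  case weyl_id then show ?case by simp
next
  case (weyl_step \<alpha> w)
  have a: "\<alpha> \<noteq> 0" using weyl_step assms(1) by auto
  show ?case using refl_inner[OF a, of "w a" "w b"] weyl_step(3) by simp
qed

lemma refl_root: "root_system \<Phi> \<Longrightarrow> \<alpha> \<in> \<Phi> \<Longrightarrow> \<beta> \<in> \<Phi> \<Longrightarrow> refl \<alpha> \<beta> \<in> \<Phi>"
  unfolding root_system_def by blast

lemma weyl_maps: assumes "root_system \<Phi>" "w \<in> weyl \<Phi>" "\<beta> \<in> \<Phi>" shows "w \<beta> \<in> \<Phi>"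
  using assms(2,3)
  by (induction w arbitrary: \<beta> rule: weyl.induct) (auto intro: refl_root[OF assms(1)])

lemma weyl_span: assumes "w \<in> weyl \<Phi>" shows "w l - l \<in> span \<Phi>"
  using assms
proof (induction w rule: weyl.induct)
  case weyl_id then show ?case by (simp add: span_zero)
next
  case (weyl_step \<alpha> w)
  have "(refl \<alpha> \<circ> w) l - l = (w l - l) - coroot \<alpha> (w l) *\<^sub>R \<alpha>"
    by (simp add: refl_def)
  then show ?case using weyl_step by (metis span_base span_diff span_scale)
qed

lemma root_system_0: "root_system \<Phi> \<Longrightarrow> 0 \<notin> \<Phi>"
  unfolding root_system_def by blast

lemma weyl_ext:
  assumes R: "root_system \<Phi>" and w1: "w1 \<in> weyl \<Phi>" and w2: "w2 \<in> weyl \<Phi>"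
    and eq: "\<forall>\<beta>\<in>\<Phi>. w1 \<beta> = w2 \<beta>"
  shows "w1 = w2"
proof
  fix l
  have z: "0 \<notin> \<Phi>" using root_system_0[OF R] .
  define d where "d = w1 l - w2 l"
  have "d = (w1 l - l) - (w2 l - l)" by (simp add: d_def)
  then have ds: "d \<in> span \<Phi>" using weyl_span[OF w1] weyl_span[OF w2] by (metis span_diff)
  have "orthogonal d \<gamma>" if g: "\<gamma> \<in> \<Phi>" for \<gamma>
  proof -
    define \<beta> where "\<beta> = inv w1 \<gamma>"
    have b: "\<beta> \<in> \<Phi>" unfolding \<beta>_def using weyl_maps[OF R weyl_inv[OF z w1] g] .
    have g': "\<gamma> = w1 \<beta>" unfolding \<beta>_def using bij_comp_inv[OF weyl_bij[OF z w1]] by (metis comp_apply id_apply)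
    have "d \<bullet> \<gamma> = w1 l \<bullet> w1 \<beta> - w2 l \<bullet> w2 \<beta>" using eq b g' by (simp add: d_def inner_diff_left)
    also have "\<dots> = 0" using weyl_inner[OF z w1] weyl_inner[OF z w2] by simp
    finally show ?thesis by (simp add: orthogonal_def)
  qed
  then have "orthogonal d d" using orthogonal_to_span[OF ds] by blast
  then have "d = 0" using orthogonal_self by blast
  then show "w1 l = w2 l" unfolding d_def by simp
qed

lemma weyl_finite: assumes R: "root_system \<Phi>" shows "finite (weyl \<Phi>)"
proof -
  have fin: "finite \<Phi>" using R unfolding root_system_def by blast
  have inj: "inj_on (\<lambda>w. restrict w \<Phi>) (weyl \<Phi>)"
  proof (rule inj_onI)
    fix a b assume "a \<in> weyl \<Phi>" "b \<in> weyl \<Phi>" "restrict a \<Phi> = restrict b \<Phi>"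
    then show "a = b" using weyl_ext[OF R] by (metis restrict_apply')
  qed
  have "(\<lambda>w. restrict w \<Phi>) ` weyl \<Phi> \<subseteq> (\<Pi>\<^sub>E i \<in> \<Phi>. \<Phi>)"
    using weyl_maps[OF R] by auto
  then have "finite ((\<lambda>w. restrict w \<Phi>) ` weyl \<Phi>)"
    using finite_PiE[OF fin, of "\<lambda>_. \<Phi>"] fin finite_subset by blast
  then show ?thesis using finite_imageD[OF _ inj] by blast
qed

lemma qinv_eq: "(a::'q::comm_ring_1) * b = 1 \<Longrightarrow> qinv a = b"
  unfolding qinv_def
  by (rule the_equality) (auto, metis mult.assoc mult.commute mult_1_right)

lemma qinv_right: "(a::'q::comm_ring_1) * b = 1 \<Longrightarrow> a * qinv a = 1"
  using qinv_eq by metis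

lemma qinv_mult: "(a::'q::comm_ring_1) * a' = 1 \<Longrightarrow> b * b' = 1 \<Longrightarrow> qinv (a * b) = qinv a * qinv b"
  by (rule qinv_eq) (metis (no_types, lifting) mult.assoc mult.left_commute qinv_eq mult_1_right)

locale rs =
  fixes \<Phi> :: "'n::finite vec set" and Sim :: "'n vec set"
  assumes R: "root_system \<Phi>" and SS: "simple_system \<Phi> Sim"
begin

lemma finPhi: "finite \<Phi>" using R unfolding root_system_def by blast
lemma zeroPhi: "0 \<notin> \<Phi>" using R unfolding root_system_def by blast
lemma reduced: "\<alpha> \<in> \<Phi> \<Longrightarrow> c *\<^sub>R \<alpha> \<in> \<Phi> \<Longrightarrow> c = 1 \<or> c = -1" using R unfolding root_system_def by blast
lemma SimPhi: "Sim \<subseteq> \<Phi>" using SS unfolding simple_system_def by blast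
lemma indep: "independent Sim" using SS unfolding simple_system_def by blast
lemma finSim: "finite Sim" using SimPhi finPhi finite_subset by blast
lemma pos_or_neg: "\<beta> \<in> \<Phi> \<Longrightarrow> nonneg_comb Sim \<beta> \<or> nonneg_comb Sim (- \<beta>)"
  using SS unfolding simple_system_def by blast

lemma uniq:
  assumes "(\<Sum>\<gamma>\<in>Sim. c \<gamma> *\<^sub>R \<gamma>) = (\<Sum>\<gamma>\<in>Sim. d \<gamma> *\<^sub>R \<gamma>)" "\<gamma> \<in> Sim"
  shows "c \<gamma> = d \<gamma>"
proof -
  have "(\<Sum>\<gamma>\<in>Sim. (c \<gamma> - d \<gamma>) *\<^sub>R \<gamma>) = 0"
    using assms(1) by (simp add: scaleR_diff_left sum_subtractf)
  then have "(\<lambda>\<gamma>. c \<gamma> - d \<gamma>) \<gamma> = 0"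
    using real_vector.independentD[OF indep finSim subset_refl, of "\<lambda>\<gamma>. c \<gamma> - d \<gamma>"] assms(2) by blast
  then show ?thesis by simp
qed

lemma neg_root: "\<beta> \<in> \<Phi> \<Longrightarrow> - \<beta> \<in> \<Phi>"
  using refl_root[OF R, of \<beta> \<beta>] refl_self[of \<beta>] zeroPhi by metis

lemma delta_sum: "\<alpha> \<in> Sim \<Longrightarrow> (\<Sum>\<gamma>\<in>Sim. (if \<gamma> = \<alpha> then k else 0) *\<^sub>R \<gamma>) = k *\<^sub>R \<alpha>"
proof -
  assume a: "\<alpha> \<in> Sim"
  have "(\<Sum>\<gamma>\<in>Sim. (if \<gamma> = \<alpha> then k else 0) *\<^sub>R \<gamma>) = (\<Sum>\<gamma>\<in>Sim. if \<gamma> = \<alpha> then k *\<^sub>R \<gamma> else 0)"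
    by (rule sum.cong) auto
  also have "\<dots> = k *\<^sub>R \<alpha>" using a finSim by simp
  finally show ?thesis .
qed

lemma simple_pos: "\<alpha> \<in> Sim \<Longrightarrow> \<alpha> \<in> pos_roots \<Phi> Sim"
  unfolding pos_roots_def nonneg_comb_def
  using SimPhi delta_sum[of \<alpha> 1]
  by (auto intro!: exI[of _ "\<lambda>\<gamma>. if \<gamma> = \<alpha> then 1 else 0"])

lemma pos_Phi: "pos_roots \<Phi> Sim \<subseteq> \<Phi>" unfolding pos_roots_def by auto

lemma pos_not_neg:
  assumes b: "\<beta> \<in> pos_roots \<Phi> Sim" shows "- \<beta> \<notin> pos_roots \<Phi> Sim"
proof
  assume nb: "- \<beta> \<in> pos_roots \<Phi> Sim"
  obtain c where c0: "\<forall>\<gamma>\<in>Sim. c \<gamma> \<ge> 0" and bc: "\<beta> = (\<Sum>\<gamma>\<in>Sim. c \<gamma> *\<^sub>R \<gamma>)"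
    using b unfolding pos_roots_def nonneg_comb_def by blast
  obtain d where d0: "\<forall>\<gamma>\<in>Sim. d \<gamma> \<ge> 0" and bd: "- \<beta> = (\<Sum>\<gamma>\<in>Sim. d \<gamma> *\<^sub>R \<gamma>)"
    using nb unfolding pos_roots_def nonneg_comb_def by blast
  have nd: "(\<Sum>\<gamma>\<in>Sim. (- d \<gamma>) *\<^sub>R \<gamma>) = - (\<Sum>\<gamma>\<in>Sim. d \<gamma> *\<^sub>R \<gamma>)" by (simp add: sum_negf)
  have "(\<Sum>\<gamma>\<in>Sim. c \<gamma> *\<^sub>R \<gamma>) = (\<Sum>\<gamma>\<in>Sim. (- d \<gamma>) *\<^sub>R \<gamma>)"
    unfolding nd bd[symmetric] bc[symmetric] by simp
  then have "\<forall>\<gamma>\<in>Sim. c \<gamma> = - d \<gamma>" using uniq[of c "\<lambda>\<gamma>. - d \<gamma>"] by blast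
  then have "\<forall>\<gamma>\<in>Sim. c \<gamma> = 0" using c0 d0 by force
  then have "\<beta> = 0" using bc by simp
  then show False using b pos_Phi zeroPhi by auto
qed

lemma refl_pos:
  assumes a: "\<alpha> \<in> Sim" and b: "\<beta> \<in> pos_roots \<Phi> Sim" and ne: "\<beta> \<noteq> \<alpha>"
  shows "refl \<alpha> \<beta> \<in> pos_roots \<Phi> Sim \<and> refl \<alpha> \<beta> \<noteq> \<alpha>"
proof -
  obtain c where c0: "\<forall>\<gamma>\<in>Sim. c \<gamma> \<ge> 0" and bc: "\<beta> = (\<Sum>\<gamma>\<in>Sim. c \<gamma> *\<^sub>R \<gamma>)"
    using b unfolding pos_roots_def nonneg_comb_def by blast
  have aP: "\<alpha> \<in> \<Phi>" using a SimPhi by auto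
  have bP: "\<beta> \<in> \<Phi>" using b pos_Phi by auto
  have ex: "\<exists>\<gamma>\<in>Sim. \<gamma> \<noteq> \<alpha> \<and> c \<gamma> \<noteq> 0"
  proof (rule ccontr)
    assume "\<not> ?thesis"
    then have z: "\<forall>\<gamma>\<in>Sim. \<gamma> \<noteq> \<alpha> \<longrightarrow> c \<gamma> = 0" by blast
    have "\<beta> = (\<Sum>\<gamma>\<in>Sim. (if \<gamma> = \<alpha> then c \<alpha> else 0) *\<^sub>R \<gamma>)"
      unfolding bc by (rule sum.cong) (use z in auto)
    then have "\<beta> = c \<alpha> *\<^sub>R \<alpha>" using delta_sum[OF a] by simp
    then have "c \<alpha> = 1 \<or> c \<alpha> = -1" using reduced[OF aP] bP by simp
    then show False using \<open>\<beta> = c \<alpha> *\<^sub>R \<alpha>\<close> ne c0 a by auto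
  qed
  then obtain \<gamma>0 where g0: "\<gamma>0 \<in> Sim" "\<gamma>0 \<noteq> \<alpha>" "c \<gamma>0 > 0" using c0 by force
  define k where "k = coroot \<alpha> \<beta>"
  define c' where "c' = (\<lambda>\<gamma>. c \<gamma> - (if \<gamma> = \<alpha> then k else 0))"
  have rc: "refl \<alpha> \<beta> = (\<Sum>\<gamma>\<in>Sim. c' \<gamma> *\<^sub>R \<gamma>)"
  proof -
    have "refl \<alpha> \<beta> = \<beta> - k *\<^sub>R \<alpha>" by (simp add: refl_def k_def)
    also have "\<dots> = (\<Sum>\<gamma>\<in>Sim. c \<gamma> *\<^sub>R \<gamma>) - (\<Sum>\<gamma>\<in>Sim. (if \<gamma> = \<alpha> then k else 0) *\<^sub>R \<gamma>)"
      using bc delta_sum[OF a] by simp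
    also have "\<dots> = (\<Sum>\<gamma>\<in>Sim. c' \<gamma> *\<^sub>R \<gamma>)"
      by (simp add: c'_def scaleR_diff_left sum_subtractf)
    finally show ?thesis .
  qed
  have rP: "refl \<alpha> \<beta> \<in> \<Phi>" using refl_root[OF R aP bP] .
  have "nonneg_comb Sim (refl \<alpha> \<beta>)"
  proof (rule ccontr)
    assume "\<not> ?thesis"
    then have "nonneg_comb Sim (- refl \<alpha> \<beta>)" using pos_or_neg[OF rP] by blast
    then obtain d where d0: "\<forall>\<gamma>\<in>Sim. d \<gamma> \<ge> 0" and bd: "- refl \<alpha> \<beta> = (\<Sum>\<gamma>\<in>Sim. d \<gamma> *\<^sub>R \<gamma>)"
      unfolding nonneg_comb_def by blast
    have nd: "(\<Sum>\<gamma>\<in>Sim. (- d \<gamma>) *\<^sub>R \<gamma>) = - (\<Sum>\<gamma>\<in>Sim. d \<gamma> *\<^sub>R \<gamma>)" by (simp add: sum_negf)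
    have "(\<Sum>\<gamma>\<in>Sim. c' \<gamma> *\<^sub>R \<gamma>) = (\<Sum>\<gamma>\<in>Sim. (- d \<gamma>) *\<^sub>R \<gamma>)"
      unfolding nd bd[symmetric] rc[symmetric] by simp
    then have "c' \<gamma>0 = - d \<gamma>0" using uniq[of c' "\<lambda>\<gamma>. - d \<gamma>"] g0(1) by blast
    then show False using g0 d0 unfolding c'_def by force
  qed
  then have rpos: "refl \<alpha> \<beta> \<in> pos_roots \<Phi> Sim" using rP unfolding pos_roots_def by blast
  have "refl \<alpha> \<beta> \<noteq> \<alpha>"
  proof
    assume "refl \<alpha> \<beta> = \<alpha>"
    then have "\<beta> = refl \<alpha> \<alpha>" using refl_refl[of \<alpha> \<beta>] aP zeroPhi by force
    then have "\<beta> = - \<alpha>" using refl_self[of \<alpha>] aP zeroPhi by force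
    then show False using pos_not_neg[OF simple_pos[OF a]] b by simp
  qed
  then show ?thesis using rpos by blast
qed

definition ht :: "'n vec \<Rightarrow> real" where
  "ht \<beta> = sum (SOME c. \<beta> = (\<Sum>\<gamma>\<in>Sim. c \<gamma> *\<^sub>R \<gamma>)) Sim"

lemma ht_eq: assumes "\<beta> = (\<Sum>\<gamma>\<in>Sim. c \<gamma> *\<^sub>R \<gamma>)" shows "ht \<beta> = sum c Sim"
proof -
  define c0 where "c0 = (SOME c. \<beta> = (\<Sum>\<gamma>\<in>Sim. c \<gamma> *\<^sub>R \<gamma>))"
  have ex: "\<exists>c. \<beta> = (\<Sum>\<gamma>\<in>Sim. c \<gamma> *\<^sub>R \<gamma>)" using assms by blast
  have e0: "\<beta> = (\<Sum>\<gamma>\<in>Sim. c0 \<gamma> *\<^sub>R \<gamma>)" using someI_ex[OF ex] by (simp only: c0_def)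
  have "(\<Sum>\<gamma>\<in>Sim. c0 \<gamma> *\<^sub>R \<gamma>) = (\<Sum>\<gamma>\<in>Sim. c \<gamma> *\<^sub>R \<gamma>)" using e0 assms by (rule subst)
  then have eq: "\<forall>\<gamma>\<in>Sim. c0 \<gamma> = c \<gamma>" using uniq[of c0 c] by blast
  have "sum c0 Sim = sum c Sim" by (rule sum.cong[OF refl]) (use eq in blast)
  then show ?thesis unfolding ht_def by (simp only: c0_def)
qed

lemma exists_pos_inner:
  assumes b: "\<beta> \<in> pos_roots \<Phi> Sim" shows "\<exists>\<alpha>\<in>Sim. \<alpha> \<bullet> \<beta> > 0"
proof (rule ccontr)
  assume "\<not> ?thesis"
  then have np: "\<forall>\<alpha>\<in>Sim. \<alpha> \<bullet> \<beta> \<le> 0" by auto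
  obtain c where c0: "\<forall>\<gamma>\<in>Sim. c \<gamma> \<ge> 0" and bc: "\<beta> = (\<Sum>\<gamma>\<in>Sim. c \<gamma> *\<^sub>R \<gamma>)"
    using b unfolding pos_roots_def nonneg_comb_def by blast
  have "\<beta> \<bullet> \<beta> = (\<Sum>\<gamma>\<in>Sim. c \<gamma> * (\<gamma> \<bullet> \<beta>))"
    by (subst (1) bc) (simp add: inner_sum_left)
  also have "\<dots> \<le> 0" using c0 np by (intro sum_nonpos) (simp add: mult_nonneg_nonpos)
  finally have "\<beta> \<bullet> \<beta> = 0" using inner_ge_zero[of \<beta>] by linarith
  then have "\<beta> = 0" by simp
  then show False using b pos_Phi zeroPhi by auto
qed

abbreviation "OR \<equiv> coeff_ring \<Phi>"

lemma O_zero: "0 \<in> OR" using cr_add[OF cr_one cr_neg[OF cr_one]] by simp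

lemma span_simple: "\<alpha> \<in> Sim \<Longrightarrow> \<alpha> \<in> span_over OR Sim"
  unfolding span_over_def mem_Collect_eq
  apply (rule exI[of _ "\<lambda>\<gamma>. if \<gamma> = \<alpha> then 1 else 0"])
  using delta_sum[of \<alpha> 1] O_zero cr_one by simp

lemma span_add:
  assumes y: "y \<in> span_over OR Sim" and a: "\<alpha> \<in> Sim" and k: "k \<in> OR"
  shows "y + k *\<^sub>R \<alpha> \<in> span_over OR Sim"
proof -
  obtain e where e: "\<forall>b\<in>Sim. e b \<in> OR" "y = (\<Sum>b\<in>Sim. e b *\<^sub>R b)"
    using y unfolding span_over_def by blast
  have A: "y + k *\<^sub>R \<alpha> = (\<Sum>b\<in>Sim. (e b + (if b = \<alpha> then k else 0)) *\<^sub>R b)"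
    using e(2) delta_sum[OF a, of k] by (simp add: scaleR_add_left sum.distrib)
  have B: "\<forall>b\<in>Sim. e b + (if b = \<alpha> then k else 0) \<in> OR"
    using e(1) k O_zero by (auto intro: cr_add)
  have "\<exists>c. y + k *\<^sub>R \<alpha> = (\<Sum>b\<in>Sim. c b *\<^sub>R b) \<and> (\<forall>b\<in>Sim. c b \<in> OR)"
    by (rule exI[where x="\<lambda>b. e b + (if b = \<alpha> then k else 0)"]) (use A B in simp)
  then show ?thesis unfolding span_over_def by blast
qed

lemma span_neg:
  assumes y: "y \<in> span_over OR Sim" shows "- y \<in> span_over OR Sim"
proof -
  obtain e where e: "\<forall>b\<in>Sim. e b \<in> OR" "y = (\<Sum>b\<in>Sim. e b *\<^sub>R b)"
    using y unfolding span_over_def by blast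
  have A: "- y = (\<Sum>b\<in>Sim. (- e b) *\<^sub>R b)" using e(2) by (simp add: sum_negf)
  have B: "\<forall>b\<in>Sim. - e b \<in> OR" using e(1) by (auto intro: cr_neg)
  have "\<exists>c. - y = (\<Sum>b\<in>Sim. c b *\<^sub>R b) \<and> (\<forall>b\<in>Sim. c b \<in> OR)"
    by (rule exI[where x="\<lambda>b. - e b"]) (use A B in simp)
  then show ?thesis unfolding span_over_def by blast
qed

lemma pos_span_aux:
  "\<forall>\<beta>. \<beta> \<in> pos_roots \<Phi> Sim \<longrightarrow> card {\<gamma>\<in>pos_roots \<Phi> Sim. ht \<gamma> < ht \<beta>} = n \<longrightarrow> \<beta> \<in> span_over OR Sim"
proof (induction n rule: less_induct)
  case (less n)
  show ?case
  proof (intro allI impI)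
    fix \<beta> assume b: "\<beta> \<in> pos_roots \<Phi> Sim" and cn: "card {\<gamma>\<in>pos_roots \<Phi> Sim. ht \<gamma> < ht \<beta>} = n"
    show "\<beta> \<in> span_over OR Sim"
    proof (cases "\<beta> \<in> Sim")
      case True then show ?thesis by (rule span_simple)
    next
      case False
      obtain \<alpha> where a: "\<alpha> \<in> Sim" "\<alpha> \<bullet> \<beta> > 0" using exists_pos_inner[OF b] by blast
      have ne: "\<beta> \<noteq> \<alpha>" using False a by auto
      have aP: "\<alpha> \<in> \<Phi>" using a SimPhi by auto
      have bP: "\<beta> \<in> \<Phi>" using b pos_Phi by auto
      define k where "k = coroot \<alpha> \<beta>"
      have aa: "\<alpha> \<bullet> \<alpha> > 0" using aP zeroPhi by (metis inner_gt_zero_iff)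
      have kpos: "k > 0" unfolding k_def coroot_def using a(2) aa by (simp add: zero_less_divide_iff)
      define \<beta>' where "\<beta>' = refl \<alpha> \<beta>"
      have b'pos: "\<beta>' \<in> pos_roots \<Phi> Sim" using refl_pos[OF a(1) b ne] \<beta>'_def by blast
      obtain c where bc: "\<beta> = (\<Sum>\<gamma>\<in>Sim. c \<gamma> *\<^sub>R \<gamma>)"
        using b unfolding pos_roots_def nonneg_comb_def by blast
      have "\<beta>' = (\<Sum>\<gamma>\<in>Sim. (c \<gamma> - (if \<gamma> = \<alpha> then k else 0)) *\<^sub>R \<gamma>)"
      proof -
        have "\<beta>' = \<beta> - k *\<^sub>R \<alpha>" by (simp add: \<beta>'_def refl_def k_def)
        also have "\<dots> = (\<Sum>\<gamma>\<in>Sim. c \<gamma> *\<^sub>R \<gamma>) - (\<Sum>\<gamma>\<in>Sim. (if \<gamma> = \<alpha> then k else 0) *\<^sub>R \<gamma>)"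
          using bc delta_sum[OF a(1)] by simp
        finally show ?thesis by (simp add: scaleR_diff_left sum_subtractf)
      qed
      then have "ht \<beta>' = sum (\<lambda>\<gamma>. c \<gamma> - (if \<gamma> = \<alpha> then k else 0)) Sim" by (rule ht_eq)
      also have "\<dots> = sum c Sim - k" using a(1) finSim by (simp add: sum_subtractf)
      finally have "ht \<beta>' = sum c Sim - k" .
      moreover have "ht \<beta> = sum c Sim" using ht_eq[OF bc] .
      ultimately have hlt: "ht \<beta>' < ht \<beta>" using kpos by simp
      have sub: "{\<gamma>\<in>pos_roots \<Phi> Sim. ht \<gamma> < ht \<beta>'} \<subset> {\<gamma>\<in>pos_roots \<Phi> Sim. ht \<gamma> < ht \<beta>}"
      proof -
        have "{\<gamma>\<in>pos_roots \<Phi> Sim. ht \<gamma> < ht \<beta>'} \<subseteq> {\<gamma>\<in>pos_roots \<Phi> Sim. ht \<gamma> < ht \<beta>}"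
          using hlt by auto
        moreover have "\<beta>' \<in> {\<gamma>\<in>pos_roots \<Phi> Sim. ht \<gamma> < ht \<beta>}" using hlt b'pos by blast
        moreover have "\<beta>' \<notin> {\<gamma>\<in>pos_roots \<Phi> Sim. ht \<gamma> < ht \<beta>'}" by simp
        ultimately show ?thesis by blast
      qed
      have "{\<gamma>\<in>pos_roots \<Phi> Sim. ht \<gamma> < ht \<beta>} \<subseteq> \<Phi>" using pos_Phi by blast
      then have fin: "finite {\<gamma>\<in>pos_roots \<Phi> Sim. ht \<gamma> < ht \<beta>}" by (rule finite_subset[OF _ finPhi])
      have "card {\<gamma>\<in>pos_roots \<Phi> Sim. ht \<gamma> < ht \<beta>'} < n" using psubset_card_mono[OF fin sub] cn by linarith
      then have b'span: "\<beta>' \<in> span_over OR Sim" using less.IH b'pos by blast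
      have beq: "\<beta> = \<beta>' + k *\<^sub>R \<alpha>" by (simp add: \<beta>'_def refl_def k_def)
      have kO: "k \<in> OR" unfolding k_def by (rule cr_gen[OF aP bP])
      show ?thesis unfolding beq by (rule span_add[OF b'span a(1) kO])
    qed
  qed
qed

lemma roots_span: "\<beta> \<in> \<Phi> \<Longrightarrow> \<beta> \<in> span_over OR Sim"
proof -
  assume bP: "\<beta> \<in> \<Phi>"
  have pos: "\<gamma> \<in> pos_roots \<Phi> Sim \<Longrightarrow> \<gamma> \<in> span_over OR Sim" for \<gamma>
    using pos_span_aux[of "card {\<gamma>'\<in>pos_roots \<Phi> Sim. ht \<gamma>' < ht \<gamma>}"] by blast
  show ?thesis
  proof (cases "nonneg_comb Sim \<beta>")
    case True then show ?thesis using pos bP unfolding pos_roots_def by blast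
  next
    case False
    then have "- \<beta> \<in> pos_roots \<Phi> Sim" using pos_or_neg[OF bP] neg_root[OF bP] unfolding pos_roots_def by blast
    then have "- \<beta> \<in> span_over OR Sim" by (rule pos)
    then have "- (- \<beta>) \<in> span_over OR Sim" by (rule span_neg)
    then show ?thesis by simp
  qed
qed

lemma neg_roots_sub: "neg_roots \<Phi> Sim \<subseteq> \<Phi>"
proof
  fix \<beta> assume "\<beta> \<in> neg_roots \<Phi> Sim"
  then obtain \<gamma> where "\<gamma> \<in> pos_roots \<Phi> Sim" "\<beta> = - \<gamma>" unfolding neg_roots_def by blast
  then show "\<beta> \<in> \<Phi>" using pos_Phi neg_root by blast
qed

lemma refl_neg_perm:
  assumes a: "\<alpha> \<in> Sim"
  shows "refl \<alpha> ` (neg_roots \<Phi> Sim - {- \<alpha>}) = neg_roots \<Phi> Sim - {- \<alpha>}"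
proof -
  have aP: "\<alpha> \<in> \<Phi>" using a SimPhi by auto
  have a0: "\<alpha> \<noteq> 0" using aP zeroPhi by auto
  have sub: "refl \<alpha> \<beta> \<in> neg_roots \<Phi> Sim - {- \<alpha>}" if bn: "\<beta> \<in> neg_roots \<Phi> Sim - {- \<alpha>}" for \<beta>
  proof -
    obtain \<gamma> where g: "\<gamma> \<in> pos_roots \<Phi> Sim" "\<beta> = - \<gamma>" using bn unfolding neg_roots_def by blast
    have mb: "- \<beta> \<in> pos_roots \<Phi> Sim" "- \<beta> \<noteq> \<alpha>" using g bn by auto
    have "refl \<alpha> (- \<beta>) \<in> pos_roots \<Phi> Sim \<and> refl \<alpha> (- \<beta>) \<noteq> \<alpha>" using refl_pos[OF a mb] .
    then have "- refl \<alpha> \<beta> \<in> pos_roots \<Phi> Sim \<and> - refl \<alpha> \<beta> \<noteq> \<alpha>" by (simp add: refl_neg)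
    then have r1: "- refl \<alpha> \<beta> \<in> pos_roots \<Phi> Sim" and r2: "- refl \<alpha> \<beta> \<noteq> \<alpha>" by blast+
    have e1: "refl \<alpha> \<beta> = - (- refl \<alpha> \<beta>)" by simp
    have A: "refl \<alpha> \<beta> \<in> uminus ` pos_roots \<Phi> Sim" using image_eqI[where f=uminus, OF e1 r1] .
    have B: "refl \<alpha> \<beta> \<noteq> - \<alpha>" using r2 by (metis minus_minus)
    show ?thesis unfolding neg_roots_def using A B by blast
  qed
  show ?thesis
  proof
    show "refl \<alpha> ` (neg_roots \<Phi> Sim - {- \<alpha>}) \<subseteq> neg_roots \<Phi> Sim - {- \<alpha>}"
      by (rule image_subsetI) (rule sub)
    show "neg_roots \<Phi> Sim - {- \<alpha>} \<subseteq> refl \<alpha> ` (neg_roots \<Phi> Sim - {- \<alpha>})"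
    proof
      fix \<beta> assume bb: "\<beta> \<in> neg_roots \<Phi> Sim - {- \<alpha>}"
      have m: "refl \<alpha> \<beta> \<in> neg_roots \<Phi> Sim - {- \<alpha>}" by (rule sub[OF bb])
      have e: "\<beta> = refl \<alpha> (refl \<alpha> \<beta>)" by (simp add: refl_refl[OF a0])
      show "\<beta> \<in> refl \<alpha> ` (neg_roots \<Phi> Sim - {- \<alpha>})" using image_eqI[where f="refl \<alpha>", OF e m] .
    qed
  qed
qed

lemma neg_simple: "\<alpha> \<in> Sim \<Longrightarrow> - \<alpha> \<in> neg_roots \<Phi> Sim"
  unfolding neg_roots_def by (rule image_eqI[of _ _ \<alpha>]) (simp_all add: simple_pos)

end

definition isu :: "'q::comm_ring_1 \<Rightarrow> bool" where "isu a \<longleftrightarrow> (\<exists>b. a * b = 1)"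

lemma isu_qinv: "isu a \<Longrightarrow> a * qinv a = 1"
  unfolding isu_def using qinv_right by blast

lemma isu_mult: "isu a \<Longrightarrow> isu b \<Longrightarrow> isu (a * b)"
  unfolding isu_def by (metis mult.assoc mult.left_commute mult_1_right)

lemma qinv_mult': "isu a \<Longrightarrow> isu b \<Longrightarrow> qinv (a * b) = qinv a * qinv b"
  unfolding isu_def using qinv_mult by blast

locale ctx = rs \<Phi> Sim for \<Phi> :: "'n::finite vec set" and Sim +
  fixes \<Lambda> :: "'n vec set" and S :: "'q::comm_ring_1 set" and x :: "'n vec \<Rightarrow> 'q"
    and act :: "('n vec \<Rightarrow> 'n vec) \<Rightarrow> 'q \<Rightarrow> 'q"
  assumes lattice: "admissible_lattice \<Phi> Sim \<Lambda>"
    and x_unit: "\<forall>\<alpha>\<in>\<Phi>. \<exists>b. x \<alpha> * b = 1"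
    and action: "weyl_ring_action (weyl \<Phi>) \<Lambda> S x act"
begin

abbreviation "W \<equiv> weyl \<Phi>"

lemma finW: "finite W" using weyl_finite[OF R] .
lemma z0: "0 \<notin> \<Phi>" by (rule zeroPhi)

lemma act_id: "act id a = a" using action unfolding weyl_ring_action_def by blast
lemma act_comp: "v \<in> W \<Longrightarrow> w \<in> W \<Longrightarrow> act (v \<circ> w) a = act v (act w a)"
  using action unfolding weyl_ring_action_def by blast
lemma act_1: "w \<in> W \<Longrightarrow> act w 1 = 1" using action unfolding weyl_ring_action_def by blast
lemma act_add: "w \<in> W \<Longrightarrow> act w (a + b) = act w a + act w b"
  using action unfolding weyl_ring_action_def by blast
lemma act_mult: "w \<in> W \<Longrightarrow> act w (a * b) = act w a * act w b"
  using action unfolding weyl_ring_action_def by blast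
lemma act_x: "w \<in> W \<Longrightarrow> l \<in> \<Lambda> \<Longrightarrow> act w (x l) = x (w l)"
  using action unfolding weyl_ring_action_def by blast

lemma act_0: "w \<in> W \<Longrightarrow> act w 0 = 0"
  using act_add[of w 0 0] by simp

lemma act_sum: "w \<in> W \<Longrightarrow> act w (sum f A) = (\<Sum>a\<in>A. act w (f a))"
proof (induction A rule: infinite_finite_induct)
  case (infinite A) then show ?case by (simp add: act_0)
next
  case empty then show ?case by (simp add: act_0)
next
  case (insert a A) then show ?case by (simp add: act_add)
qed

lemma act_prod: "w \<in> W \<Longrightarrow> act w (prod f A) = (\<Prod>a\<in>A. act w (f a))"
proof (induction A rule: infinite_finite_induct)
  case (infinite A) then show ?case by (simp add: act_1)
next
  case empty then show ?case by (simp add: act_1)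
next
  case (insert a A) then show ?case by (simp add: act_mult)
qed

lemma act_isu: "w \<in> W \<Longrightarrow> isu a \<Longrightarrow> isu (act w a)"
  unfolding isu_def using act_mult act_1 by metis

lemma act_qinv: "w \<in> W \<Longrightarrow> isu a \<Longrightarrow> act w (qinv a) = qinv (act w a)"
proof -
  assume w: "w \<in> W" and a: "isu a"
  have "act w a * act w (qinv a) = 1" using act_mult[OF w, of a "qinv a"] isu_qinv[OF a] act_1[OF w] by simp
  then show ?thesis using qinv_eq by metis
qed

lemma x_isu: "\<alpha> \<in> \<Phi> \<Longrightarrow> isu (x \<alpha>)" using x_unit unfolding isu_def by blast

lemma Phi_Lambda: "\<beta> \<in> \<Phi> \<Longrightarrow> \<beta> \<in> \<Lambda>"
  using roots_span lattice unfolding admissible_lattice_def root_lattice_def by blast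

abbreviation "p \<equiv> xPi \<Phi> Sim x"
abbreviation "Ng \<equiv> neg_roots \<Phi> Sim"

lemma finNg: "finite Ng" using neg_roots_sub finPhi finite_subset by blast

lemma p_isu: "isu p"
proof -
  have "p * (\<Prod>\<beta>\<in>Ng. qinv (x \<beta>)) = (\<Prod>\<beta>\<in>Ng. x \<beta> * qinv (x \<beta>))"
    unfolding xPi_def by (simp add: prod.distrib)
  also have "\<dots> = 1" using neg_roots_sub x_isu isu_qinv by (intro prod.neutral) blast
  finally show ?thesis unfolding isu_def by blast
qed

lemma keyK:
  assumes a: "\<alpha> \<in> Sim"
  shows "act (refl \<alpha>) p * x (- \<alpha>) = p * x \<alpha>"
proof -
  define s where "s = refl \<alpha>"
  have aP: "\<alpha> \<in> \<Phi>" using a SimPhi by auto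
  have a0: "\<alpha> \<noteq> 0" using aP z0 by auto
  have sW: "s \<in> W" unfolding s_def by (rule refl_in_weyl[OF aP])
  have na: "- \<alpha> \<in> Ng" by (rule neg_simple[OF a])
  define Q where "Q = (\<Prod>\<beta>\<in>Ng - {- \<alpha>}. x \<beta>)"
  have p_eq: "p = x (- \<alpha>) * Q" unfolding xPi_def Q_def using prod.remove[OF finNg na] .
  have "act s p = (\<Prod>\<beta>\<in>Ng. act s (x \<beta>))" unfolding xPi_def by (rule act_prod[OF sW])
  also have "\<dots> = (\<Prod>\<beta>\<in>Ng. x (s \<beta>))"
    by (rule prod.cong[OF refl]) (use act_x[OF sW] Phi_Lambda neg_roots_sub in blast)
  also have "\<dots> = x (s (- \<alpha>)) * (\<Prod>\<beta>\<in>Ng - {- \<alpha>}. x (s \<beta>))" using prod.remove[OF finNg na] .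
  also have "s (- \<alpha>) = \<alpha>" unfolding s_def by (metis refl_neg refl_self[OF a0] minus_minus)
  also have "(\<Prod>\<beta>\<in>Ng - {- \<alpha>}. x (s \<beta>)) = (\<Prod>\<beta>\<in>s ` (Ng - {- \<alpha>}). x \<beta>)"
  proof -
    have "inj_on s (Ng - {- \<alpha>})" unfolding s_def using bij_refl[OF a0] by (metis bij_is_inj inj_on_subset subset_UNIV)
    then show ?thesis using prod.reindex by (metis comp_apply prod.cong)
  qed
  also have "s ` (Ng - {- \<alpha>}) = Ng - {- \<alpha>}" unfolding s_def by (rule refl_neg_perm[OF a])
  finally have "act s p = x \<alpha> * Q" unfolding Q_def .
  then show ?thesis unfolding s_def[symmetric] using p_eq by (simp add: ac_simps)
qed

definition Pf :: "(('n vec \<Rightarrow> 'n vec) \<Rightarrow> 'q) \<Rightarrow> (('n vec \<Rightarrow> 'n vec) \<Rightarrow> 'q) \<Rightarrow> 'q" where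
  "Pf a b = (\<Sum>t\<in>W. qinv (act t p) * (a t * b t))"

lemma key_coef:
  assumes a: "\<alpha> \<in> Sim" and t: "t \<in> W"
  shows "qinv (act (t \<circ> refl \<alpha>) p) * act (t \<circ> refl \<alpha>) (qinv (x \<alpha>)) = qinv (act t p) * act t (qinv (x \<alpha>))"
proof -
  define s where "s = refl \<alpha>"
  have aP: "\<alpha> \<in> \<Phi>" using a SimPhi by auto
  have a0: "\<alpha> \<noteq> 0" using aP z0 by auto
  have sW: "s \<in> W" unfolding s_def by (rule refl_in_weyl[OF aP])
  have naP: "- \<alpha> \<in> \<Phi>" by (rule neg_root[OF aP])
  have u1: "isu (act s p)" using act_isu[OF sW p_isu] .
  have u2: "isu (x (- \<alpha>))" using x_isu[OF naP] .
  have u3: "isu (x \<alpha>)" using x_isu[OF aP] .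
  have "act s (qinv (x \<alpha>)) = qinv (act s (x \<alpha>))" using act_qinv[OF sW u3] .
  also have "act s (x \<alpha>) = x (- \<alpha>)" using act_x[OF sW Phi_Lambda[OF aP]] refl_self[OF a0] s_def by simp
  finally have e1: "act s (qinv (x \<alpha>)) = qinv (x (- \<alpha>))" .
  have "qinv (act (t \<circ> s) p) * act (t \<circ> s) (qinv (x \<alpha>))
      = qinv (act t (act s p)) * act t (qinv (x (- \<alpha>)))"
    using act_comp[OF t sW] e1 by simp
  also have "\<dots> = qinv (act t (act s p)) * qinv (act t (x (- \<alpha>)))" using act_qinv[OF t u2] by simp
  also have "\<dots> = qinv (act t (act s p) * act t (x (- \<alpha>)))"
    using qinv_mult'[OF act_isu[OF t u1] act_isu[OF t u2]] by simp
  also have "act t (act s p) * act t (x (- \<alpha>)) = act t (p * x \<alpha>)"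
    using act_mult[OF t, of "act s p" "x (- \<alpha>)"] keyK[OF a] s_def by simp
  also have "\<dots> = act t p * act t (x \<alpha>)" using act_mult[OF t] by simp
  also have "qinv \<dots> = qinv (act t p) * qinv (act t (x \<alpha>))"
    using qinv_mult'[OF act_isu[OF t p_isu] act_isu[OF t u3]] .
  also have "\<dots> = qinv (act t p) * act t (qinv (x \<alpha>))" using act_qinv[OF t u3] by simp
  finally show ?thesis unfolding s_def .
qed

lemma hecke_Y:
  assumes a: "\<alpha> \<in> Sim" and t: "t \<in> W"
  shows "hecke W act (Yop x \<alpha>) f t = act t (qinv (x (- \<alpha>))) * f t + act t (qinv (x \<alpha>)) * f (t \<circ> refl \<alpha>)"
proof -
  have aP: "\<alpha> \<in> \<Phi>" using a SimPhi by auto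
  have sW: "refl \<alpha> \<in> W" by (rule refl_in_weyl[OF aP])
  have "hecke W act (Yop x \<alpha>) f t = (\<Sum>w\<in>W. (if w = id then act t (qinv (x (- \<alpha>))) * f (t \<circ> w) else 0)
        + (if w = refl \<alpha> then act t (qinv (x \<alpha>)) * f (t \<circ> w) else 0))"
    unfolding hecke_def
    by (rule sum.cong[OF refl]) (auto simp: Yop_def act_add[OF t] act_0[OF t] distrib_right)
  also have "\<dots> = act t (qinv (x (- \<alpha>))) * f t + act t (qinv (x \<alpha>)) * f (t \<circ> refl \<alpha>)"
    unfolding sum.distrib using finW sW by (simp add: weyl.weyl_id)
  finally show ?thesis .
qed

lemma selfadj:
  assumes a: "\<alpha> \<in> Sim"
  shows "Pf (hecke W act (Yop x \<alpha>) f) g = Pf f (hecke W act (Yop x \<alpha>) g)"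
proof -
  define s where "s = refl \<alpha>"
  have aP: "\<alpha> \<in> \<Phi>" using a SimPhi by auto
  have a0: "\<alpha> \<noteq> 0" using aP z0 by auto
  have sW: "s \<in> W" unfolding s_def by (rule refl_in_weyl[OF aP])
  define A where "A = qinv (x (- \<alpha>))"
  define B where "B = qinv (x \<alpha>)"
  define S1 where "S1 = (\<Sum>t\<in>W. qinv (act t p) * act t A * f t * g t)"
  define S2 where "S2 = (\<Sum>t\<in>W. qinv (act t p) * act t B * f (t \<circ> s) * g t)"
  define S3 where "S3 = (\<Sum>t\<in>W. qinv (act t p) * act t B * f t * g (t \<circ> s))"
  have L: "Pf (hecke W act (Yop x \<alpha>) f) g = S1 + S2"
    unfolding Pf_def S1_def S2_def sum.distrib[symmetric]
    by (rule sum.cong[OF refl]) (simp add: hecke_Y[OF a] A_def B_def s_def algebra_simps)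
  have Rr: "Pf f (hecke W act (Yop x \<alpha>) g) = S1 + S3"
    unfolding Pf_def S1_def S3_def sum.distrib[symmetric]
    by (rule sum.cong[OF refl]) (simp add: hecke_Y[OF a] A_def B_def s_def algebra_simps)
  have "S3 = (\<Sum>t\<in>W. qinv (act (t \<circ> s) p) * act (t \<circ> s) B * f (t \<circ> s) * g (t \<circ> s \<circ> s))"
    unfolding S3_def using sum_right_weyl[OF z0 sW, of "\<lambda>t. qinv (act t p) * act t B * f t * g (t \<circ> s)"]
    by (simp add: comp_assoc)
  also have "\<dots> = S2" unfolding S2_def
  proof (rule sum.cong[OF refl])
    fix t assume t: "t \<in> W"
    have "t \<circ> s \<circ> s = t" unfolding s_def using refl_comp_self[OF a0] by (simp add: comp_assoc)
    moreover have "qinv (act (t \<circ> s) p) * act (t \<circ> s) B = qinv (act t p) * act t B"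
      unfolding s_def B_def by (rule key_coef[OF a t])
    ultimately show "qinv (act (t \<circ> s) p) * act (t \<circ> s) B * f (t \<circ> s) * g (t \<circ> s \<circ> s)
        = qinv (act t p) * act t B * f (t \<circ> s) * g t" by simp
  qed
  finally show ?thesis using L Rr by simp
qed

end

context ctx
begin

lemma fiber_sum:
  assumes u: "u \<in> W"
  shows "(\<Sum>r\<in>W. \<Sum>w\<in>{w\<in>W. u \<circ> w = r}. H w r) = (\<Sum>w\<in>W. H w (u \<circ> w))"
proof -
  have "(\<Sum>r\<in>W. \<Sum>w\<in>{w\<in>W. u \<circ> w = r}. H w r) = (\<Sum>r\<in>W. \<Sum>w\<in>W. if u \<circ> w = r then H w r else 0)"
    by (rule sum.cong[OF refl]) (simp add: sum.inter_filter[OF finW])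
  also have "\<dots> = (\<Sum>w\<in>W. \<Sum>r\<in>W. if u \<circ> w = r then H w r else 0)" by (rule sum.swap)
  also have "\<dots> = (\<Sum>w\<in>W. H w (u \<circ> w))"
    by (rule sum.cong[OF refl]) (simp add: finW weyl_comp[OF u])
  finally show ?thesis .
qed

lemma module_law:
  assumes t: "t \<in> W"
  shows "hecke W act (qw_mult W act A B) f t = hecke W act A (hecke W act B f) t"
proof -
  have "hecke W act (qw_mult W act A B) f t
      = (\<Sum>r\<in>W. \<Sum>u\<in>W. \<Sum>w\<in>{w\<in>W. u \<circ> w = r}. act t (A u) * act (t \<circ> u) (B w) * f (t \<circ> r))"
    unfolding hecke_def qw_mult_def
    by (rule sum.cong[OF refl])
       (simp add: act_sum[OF t] act_mult[OF t] act_comp[OF t] sum_distrib_right)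
  also have "\<dots> = (\<Sum>u\<in>W. \<Sum>r\<in>W. \<Sum>w\<in>{w\<in>W. u \<circ> w = r}. act t (A u) * act (t \<circ> u) (B w) * f (t \<circ> r))"
    by (rule sum.swap)
  also have "\<dots> = (\<Sum>u\<in>W. \<Sum>w\<in>W. act t (A u) * act (t \<circ> u) (B w) * f (t \<circ> (u \<circ> w)))"
    by (rule sum.cong[OF refl]) (rule fiber_sum)
  also have "\<dots> = hecke W act A (hecke W act B f) t"
    unfolding hecke_def
    by (rule sum.cong[OF refl]) (simp add: sum_distrib_left comp_assoc mult.assoc)
  finally show ?thesis .
qed

lemma hecke_delta:
  assumes t: "t \<in> W"
  shows "hecke W act (qw_delta id) f t = f t"
proof -
  have "hecke W act (qw_delta id) f t = (\<Sum>w\<in>W. if w = id then f t else 0)"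
    unfolding hecke_def qw_delta_def
    by (rule sum.cong[OF refl]) (simp add: act_1[OF t] act_0[OF t])
  also have "\<dots> = f t" using finW by (simp add: weyl.weyl_id)
  finally show ?thesis .
qed

lemma hecke_cong:
  assumes t: "t \<in> W" and fg: "\<forall>r\<in>W. f r = g r"
  shows "hecke W act c f t = hecke W act c g t"
  unfolding hecke_def by (rule sum.cong[OF refl]) (simp add: fg weyl_comp[OF t])

definition hk :: "'n vec list \<Rightarrow> (('n vec \<Rightarrow> 'n vec) \<Rightarrow> 'q) \<Rightarrow> ('n vec \<Rightarrow> 'n vec) \<Rightarrow> 'q" where
  "hk J f = foldr (\<lambda>\<alpha> g. hecke W act (Yop x \<alpha>) g) J f"

lemma hk_eq: "t \<in> W \<Longrightarrow> hecke W act (Yword W act x J) f t = hk J f t"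
proof (induction J arbitrary: t)
  case Nil
  then show ?case by (simp add: Yword_def hk_def hecke_delta)
next
  case (Cons \<alpha> J)
  have "hecke W act (Yword W act x (\<alpha> # J)) f t
      = hecke W act (qw_mult W act (Yop x \<alpha>) (Yword W act x J)) f t" by (simp add: Yword_def)
  also have "\<dots> = hecke W act (Yop x \<alpha>) (hecke W act (Yword W act x J) f) t" by (rule module_law[OF Cons.prems])
  also have "\<dots> = hecke W act (Yop x \<alpha>) (hk J f) t" by (rule hecke_cong[OF Cons.prems]) (simp add: Cons.IH)
  also have "\<dots> = hk (\<alpha> # J) f t" by (simp add: hk_def)
  finally show ?case .
qed

lemma Pf_cong: "\<forall>t\<in>W. a t = a' t \<Longrightarrow> \<forall>t\<in>W. b t = b' t \<Longrightarrow> Pf a b = Pf a' b'"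
  unfolding Pf_def by (rule sum.cong[OF refl]) simp

lemma adj: "set J \<subseteq> Sim \<Longrightarrow> Pf (hk J f) g = Pf f (hk (rev J) g)"
proof (induction J arbitrary: f g)
  case Nil then show ?case by (simp add: hk_def)
next
  case (Cons \<alpha> J)
  have a: "\<alpha> \<in> Sim" and J: "set J \<subseteq> Sim" using Cons.prems by auto
  have "Pf (hk (\<alpha> # J) f) g = Pf (hecke W act (Yop x \<alpha>) (hk J f)) g" by (simp add: hk_def)
  also have "\<dots> = Pf (hk J f) (hecke W act (Yop x \<alpha>) g)" by (rule selfadj[OF a])
  also have "\<dots> = Pf f (hk (rev J) (hecke W act (Yop x \<alpha>) g))" by (rule Cons.IH[OF J])
  also have "\<dots> = Pf f (hk (rev (\<alpha> # J)) g)" by (simp add: hk_def)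
  finally show ?case .
qed

lemma class_v_eq:
  assumes v: "v \<in> W"
  shows "class_v W act p v u = (if u = v then act v p else 0)"
proof -
  have "class_v W act p v u = (\<Sum>w\<in>W. if w = v then act v (class_e p (inv v \<circ> u)) else 0)"
    unfolding class_v_def weyl_act_def qw_delta_def by (rule sum.cong[OF refl]) simp
  also have "\<dots> = act v (class_e p (inv v \<circ> u))" using finW v by simp
  also have "\<dots> = (if u = v then act v p else 0)"
  proof -
    have bv: "bij v" using weyl_bij[OF z0 v] .
    have "inv v \<circ> u = id \<longleftrightarrow> u = v"
    proof
      assume "inv v \<circ> u = id"
      then have "v \<circ> (inv v \<circ> u) = v" by simp
      then show "u = v" using bij_comp_inv[OF bv] by (simp add: comp_assoc[symmetric])
    next
      assume "u = v" then show "inv v \<circ> u = id" using bij_inv_comp[OF bv] by simp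
    qed
    then show ?thesis unfolding class_e_def using act_0[OF v] by auto
  qed
  finally show ?thesis .
qed

lemma pi_in:
  assumes u: "u \<in> W"
  shows "hecke W act (pi_elt act p) (zprod f g) u = Pf f g"
proof -
  have "hecke W act (pi_elt act p) (zprod f g) u = (\<Sum>w\<in>W. qinv (act (u \<circ> w) p) * (f (u \<circ> w) * g (u \<circ> w)))"
    unfolding hecke_def pi_elt_def zprod_def
    by (rule sum.cong[OF refl]) (simp add: act_qinv[OF u act_isu[OF _ p_isu]] act_comp[OF u])
  also have "\<dots> = Pf f g" unfolding Pf_def by (rule sum_left_weyl[OF z0 u])
  finally show ?thesis .
qed

lemma pi_out:
  assumes u: "u \<notin> W" and fg: "\<forall>r. r \<notin> W \<longrightarrow> f r * g r = 0"
  shows "hecke W act (pi_elt act p) (zprod f g) u = 0"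
proof -
  have "u \<circ> w \<notin> W" if w: "w \<in> W" for w
  proof
    assume "u \<circ> w \<in> W"
    then have "u \<circ> w \<circ> inv w \<in> W" using weyl_comp[OF _ weyl_inv[OF z0 w]] by blast
    moreover have "u \<circ> w \<circ> inv w = u" using bij_comp_inv[OF weyl_bij[OF z0 w]] by (simp add: comp_assoc)
    ultimately show False using u by simp
  qed
  then show ?thesis unfolding hecke_def zprod_def using fg by (simp add: sum.neutral)
qed

lemma Pf_cv:
  assumes v: "v \<in> W"
  shows "Pf (class_v W act p v) g = g v"
proof -
  have "Pf (class_v W act p v) g = (\<Sum>t\<in>W. if t = v then qinv (act v p) * (act v p * g v) else 0)"
    unfolding Pf_def by (rule sum.cong[OF refl]) (simp add: class_v_eq[OF v])
  also have "\<dots> = qinv (act v p) * act v p * g v" using finW v by (simp add: mult.assoc)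
  also have "qinv (act v p) * act v p = 1" using isu_qinv[OF act_isu[OF v p_isu]] by (simp add: mult.commute)
  finally show ?thesis by simp
qed

end

theorem lemma3p5:
  fixes \<Phi> Sim \<Lambda> :: "('n::finite) vec set"
    and S :: "'q::comm_ring_1 set"
    and x :: "'n vec \<Rightarrow> 'q"
    and act :: "('n vec \<Rightarrow> 'n vec) \<Rightarrow> 'q \<Rightarrow> 'q"
    and z :: "('n vec \<Rightarrow> 'n vec) \<Rightarrow> 'q"
    and v w :: "'n vec \<Rightarrow> 'n vec"
    and I :: "'n vec list"
  assumes root: "root_system \<Phi>"
    and simple: "simple_system \<Phi> Sim"
    and lattice: "admissible_lattice \<Phi> Sim \<Lambda>"
    and S_ring: "subring_of S"
    and x_in_S: "\<forall>l\<in>\<Lambda>. x l \<in> S"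
    and x_zero: "x 0 = 0"
    and x_unit: "\<forall>\<alpha>\<in>\<Phi>. \<exists>b. x \<alpha> * b = 1"
    and action: "weyl_ring_action (weyl \<Phi>) \<Lambda> S x act"
    and regular: "\<forall>\<alpha>\<in>pos_roots \<Phi> Sim. \<forall>f\<in>S. x \<alpha> * f = 0 \<longrightarrow> f = 0"
    and divis: "\<forall>\<alpha>\<in>pos_roots \<Phi> Sim. \<forall>\<alpha>'\<in>pos_roots \<Phi> Sim. \<forall>f\<in>S. \<alpha> \<noteq> \<alpha>' \<longrightarrow>
                  (\<exists>g\<in>S. x \<alpha>' * f = x \<alpha> * g) \<longrightarrow> (\<exists>g\<in>S. f = x \<alpha> * g)"
    and z_in: "z \<in> struct_alg (weyl \<Phi>) (pos_roots \<Phi> Sim) S x"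
    and v_in: "v \<in> weyl \<Phi>"
    and w_in: "w \<in> weyl \<Phi>"
    and red: "reduced_word Sim I w"
  shows "hecke (weyl \<Phi>) act (pi_elt act (xPi \<Phi> Sim x))
           (zprod (hecke (weyl \<Phi>) act (Yword (weyl \<Phi>) act x (rev I)) (class_v (weyl \<Phi>) act (xPi \<Phi> Sim x) v)) z)
       = hecke (weyl \<Phi>) act (pi_elt act (xPi \<Phi> Sim x))
           (zprod (class_v (weyl \<Phi>) act (xPi \<Phi> Sim x) v) (hecke (weyl \<Phi>) act (Yword (weyl \<Phi>) act x I) z))
     \<and> hecke (weyl \<Phi>) act (pi_elt act (xPi \<Phi> Sim x))
           (zprod (class_v (weyl \<Phi>) act (xPi \<Phi> Sim x) v) (hecke (weyl \<Phi>) act (Yword (weyl \<Phi>) act x I) z))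
       = (\<lambda>u. hecke (weyl \<Phi>) act (Yword (weyl \<Phi>) act x I) z v * zone (weyl \<Phi>) u)"
proof -
  interpret C: ctx \<Phi> Sim \<Lambda> S x act
  proof unfold_locales
    show "root_system \<Phi>" by (rule root)
    show "simple_system \<Phi> Sim" by (rule simple)
    show "admissible_lattice \<Phi> Sim \<Lambda>" by (rule lattice)
    show "\<forall>\<alpha>\<in>\<Phi>. \<exists>b. x \<alpha> * b = 1" by (rule x_unit)
    show "weyl_ring_action (weyl \<Phi>) \<Lambda> S x act" by (rule action)
  qed
  define cv where "cv = class_v (weyl \<Phi>) act (xPi \<Phi> Sim x) v"
  define y where "y = hecke (weyl \<Phi>) act (Yword (weyl \<Phi>) act x I) z"
  define ze where "ze = hecke (weyl \<Phi>) act (Yword (weyl \<Phi>) act x (rev I)) cv"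
  have setI: "set I \<subseteq> Sim" using red unfolding reduced_word_def by blast
  have setrI: "set (rev I) \<subseteq> Sim" using setI by simp
  have zW: "\<forall>r. r \<notin> weyl \<Phi> \<longrightarrow> z r = 0" using z_in unfolding struct_alg_def by blast
  have "C.Pf ze z = C.Pf (C.hk (rev I) cv) z"
    unfolding ze_def by (rule C.Pf_cong) (simp_all add: C.hk_eq)
  also have "\<dots> = C.Pf cv (C.hk (rev (rev I)) z)" by (rule C.adj[OF setrI])
  also have "\<dots> = C.Pf cv y"
    unfolding y_def by (rule C.Pf_cong) (simp_all add: C.hk_eq)
  finally have P1: "C.Pf ze z = C.Pf cv y" .
  have P2: "C.Pf cv y = y v" unfolding cv_def by (rule C.Pf_cv[OF v_in])
  have cvW: "\<forall>r. r \<notin> weyl \<Phi> \<longrightarrow> cv r * y r = 0"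
    unfolding cv_def using C.class_v_eq[OF v_in] v_in by auto
  have zeW: "\<forall>r. r \<notin> weyl \<Phi> \<longrightarrow> ze r * z r = 0" using zW by simp
  have c1: "hecke (weyl \<Phi>) act (pi_elt act (xPi \<Phi> Sim x)) (zprod ze z)
      = hecke (weyl \<Phi>) act (pi_elt act (xPi \<Phi> Sim x)) (zprod cv y)"
  proof
    fix u show "hecke (weyl \<Phi>) act (pi_elt act (xPi \<Phi> Sim x)) (zprod ze z) u
      = hecke (weyl \<Phi>) act (pi_elt act (xPi \<Phi> Sim x)) (zprod cv y) u"
    proof (cases "u \<in> weyl \<Phi>")
      case True
      then show ?thesis using C.pi_in[OF True] P1 by simp
    next
      case False
      then show ?thesis using C.pi_out[OF False zeW] C.pi_out[OF False cvW] by simp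
    qed
  qed
  have c2: "hecke (weyl \<Phi>) act (pi_elt act (xPi \<Phi> Sim x)) (zprod cv y)
      = (\<lambda>u. y v * zone (weyl \<Phi>) u)"
  proof
    fix u show "hecke (weyl \<Phi>) act (pi_elt act (xPi \<Phi> Sim x)) (zprod cv y) u = y v * zone (weyl \<Phi>) u"
    proof (cases "u \<in> weyl \<Phi>")
      case True
      then show ?thesis using C.pi_in[OF True] P2 by (simp add: zone_def)
    next
      case False
      then show ?thesis using C.pi_out[OF False cvW] by (simp add: zone_def)
    qed
  qed
  show ?thesis using c1 c2 unfolding cv_def y_def ze_def by simp
qed

end
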